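(* Let $A,B\in M_\ell(F)$ commute, let $Q=\mathrm{CSS}(H_X,H_Z)$ with $H_X=(A\ \ B)$, $H_Z=(B^T\ \ -A^T)$ be the two-block code, and fix idempotents $E_A,F_A$ associated with $A$ and $E_B,F_B$ associated with $B$. Define $$H_X^{(L)}=\begin{pmatrix}A&B\\0&I-E_A\end{pmatrix},\qquad H_X^{(R)}=\begin{pmatrix}A&B\\ I-E_B&0\end{pmatrix},$$ $Q'_\mu=\mathrm{CSS}(H_X^{(\mu)},H_Z)$ for $\mu\in\{L,R\}$; $Q''_L=\mathrm{CSS}(A,(H_Z)_L)$ with $(H_Z)_L=(B(I-F_A))^T$ and $Q''_R=\mathrm{CSS}(B,(H_Z)_R)$ with $(H_Z)_R=(A(I-F_B))^T$ (all of these are stabilizer CSS codes, i.e., the orthogonality condition holds); and classical codes $C_L=\{u\in F^\ell: Au=0,\ E_Bu=0\}$ and $C_R=\{u\in F^\ell: Bu=0,\ E_Au=0\}$ (the codes with parity-check matrices $\binom{A}{E_B}$ and $\binom{B}{E_A}$). Then for each $\mu\in\{L,R\}$, $$d_Z(Q)\le d_Z(Q'_\mu)\le d_Z(Q''_\mu)\le d(C_\mu).$$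
   Context: $F=\mathbb F_q$ is a finite field. For a matrix $H$ with $n$ columns, $C_H$ is its row space and $C_H^\perp$ its orthogonal complement in $F^n$. For $H_X,H_Z$ with $H_XH_Z^T=0$, $\mathrm{CSS}(H_X,H_Z)$ has $Z$-distance $d_Z=\min\{\mathrm{wgt}(c):c\in C_{H_X}^\perp\setminus C_{H_Z}\}$, where $\mathrm{wgt}$ is the Hamming weight and the minimum of the empty set is $\infty$. For a classical linear code $C$, $d(C)$ is the minimum weight of a nonzero codeword ($\infty$ if $C=\{0\}$). Idempotents associated with a matrix $A$: any $E_A,F_A$ with $E_A^2=E_A$, $F_A^2=F_A$, $\mathrm{rank}E_A=\mathrm{rank}F_A=\mathrm{rank}A$, $E_AA=AF_A=A$; similarly $E_B,F_B$ for $B$. *)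

theory Defs
  imports "Jordan_Normal_Form.DL_Rank" "HOL-Library.Extended_Nat"
begin

definition wgt :: "'a::zero vec \<Rightarrow> nat" where
  "wgt v = card {i. i < dim_vec v \<and> v $ i \<noteq> 0}"

definition row_space :: "'a::comm_ring_1 mat \<Rightarrow> 'a vec set" where
  "row_space H = {v. \<exists>c \<in> carrier_vec (dim_row H). v = transpose_mat H *\<^sub>v c}"

definition orth_compl :: "nat \<Rightarrow> 'a::comm_ring_1 vec set \<Rightarrow> 'a vec set" where
  "orth_compl n C = {v \<in> carrier_vec n. \<forall>w \<in> C. w \<bullet> v = 0}"

text \<open>Z-distance of CSS(HX, HZ); the infimum of the empty set is \<infinity>.\<close>
definition dZ :: "'a::comm_ring_1 mat \<Rightarrow> 'a mat \<Rightarrow> enat" where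
  "dZ HX HZ = Inf ((\<lambda>c. enat (wgt c)) ` (orth_compl (dim_col HX) (row_space HX) - row_space HZ))"

text \<open>Minimum distance of a classical linear code (\<infinity> for the zero code).\<close>
definition min_dist :: "nat \<Rightarrow> 'a::zero vec set \<Rightarrow> enat" where
  "min_dist n C = Inf ((\<lambda>c. enat (wgt c)) ` (C - {0\<^sub>v n}))"

definition hcat :: "'a mat \<Rightarrow> 'a mat \<Rightarrow> 'a mat" where
  "hcat A B = mat (dim_row A) (dim_col A + dim_col B)
     (\<lambda>(i,j). if j < dim_col A then A $$ (i,j) else B $$ (i, j - dim_col A))"

definition assoc_idempotents :: "nat \<Rightarrow> 'a::field mat \<Rightarrow> 'a mat \<Rightarrow> 'a mat \<Rightarrow> bool" where
  "assoc_idempotents l A E F \<longleftrightarrow>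
     E \<in> carrier_mat l l \<and> F \<in> carrier_mat l l \<and>
     E * E = E \<and> F * F = F \<and>
     vec_space.rank l E = vec_space.rank l A \<and> vec_space.rank l F = vec_space.rank l A \<and>
     E * A = A \<and> A * F = A"

end

theory Submission
  imports Defs
begin

lemma finite_carrier_vec_fin: "finite (carrier_vec l :: 'a::finite vec set)"
proof -
  have "carrier_vec l \<subseteq> vec_of_list ` {xs :: 'a list. set xs \<subseteq> UNIV \<and> length xs = l}"
  proof
    fix v :: "'a vec" assume "v \<in> carrier_vec l"
    then show "v \<in> vec_of_list ` {xs. set xs \<subseteq> UNIV \<and> length xs = l}"
      by (intro image_eqI[of _ _ "list_of_vec v"]) (auto simp: vec_list)
  qed
  moreover have "finite {xs :: 'a list. set xs \<subseteq> UNIV \<and> length xs = l}"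
    by (rule finite_lists_length_eq) simp
  ultimately show ?thesis by (meson finite_imageI finite_subset)
qed

lemma ker_idem:
  fixes A F :: "'a::{finite,field} mat"
  assumes A: "A \<in> carrier_mat l l" and F: "F \<in> carrier_mat l l"
    and AF: "A * F = A" and rk: "vec_space.rank l F = vec_space.rank l A"
    and c: "c \<in> carrier_vec l" and Ac: "A *\<^sub>v c = 0\<^sub>v l"
  shows "F *\<^sub>v c = 0\<^sub>v l"
proof -
  interpret vec_space "TYPE('a)" l .
  define SF where "SF = span (set (cols F))"
  define SA where "SA = span (set (cols A))"
  have SF_eq: "SF = {y \<in> carrier_vec l. \<exists>x\<in>carrier_vec l. F *\<^sub>v x = y}"
    using col_space_eq[OF F] F unfolding SF_def col_space_def by auto
  have SA_eq: "SA = {y \<in> carrier_vec l. \<exists>x\<in>carrier_vec l. A *\<^sub>v x = y}"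
    using col_space_eq[OF A] A unfolding SA_def col_space_def by auto
  have subF: "VectorSpace.subspace class_ring SF V" unfolding SF_def
    by (rule span_is_subspace) (use F cols_dim in fastforce)
  have subA: "VectorSpace.subspace class_ring SA V" unfolding SA_def
    by (rule span_is_subspace) (use A cols_dim in fastforce)
  have vsF: "vectorspace class_ring (vs SF)" by (rule subspace_is_vs[OF subF])
  have vsA: "vectorspace class_ring (vs SA)" by (rule subspace_is_vs[OF subA])
  have lm: "linear_map class_ring (vs SF) (vs SA) (\<lambda>v. A *\<^sub>v v)"
  proof -
    have "(\<lambda>v. A *\<^sub>v v) \<in> LinearCombinations.module_hom class_ring (vs SF) (vs SA)"
      unfolding LinearCombinations.module_hom_def using A SF_eq SA_eq
      by (auto simp: mult_add_distrib_mat_vec mult_mat_vec)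
    then show ?thesis
      unfolding linear_map_def mod_hom_def mod_hom_axioms_def
      using vsF vsA vectorspace.axioms by blast
  qed
  interpret T: linear_map class_ring "vs SF" "vs SA" "\<lambda>v. A *\<^sub>v v" by (rule lm)
  have fdF: "T.V.fin_dim" using fin_dim_span_cols[OF F] unfolding SF_def .
  have rn: "vectorspace.dim class_ring (T.W.vs T.imT) + vectorspace.dim class_ring (T.V.vs T.kerT) = T.V.dim"
    by (rule T.rank_nullity[OF fdF])
  have imT: "T.imT = SA"
  proof -
    have "T.imT = (\<lambda>v. A *\<^sub>v v) ` SF" unfolding T.im_def by simp
    also have "\<dots> = SA"
    proof
      show "(\<lambda>v. A *\<^sub>v v) ` SF \<subseteq> SA" using SF_eq SA_eq A by auto
      show "SA \<subseteq> (\<lambda>v. A *\<^sub>v v) ` SF"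
      proof
        fix y assume "y \<in> SA"
        then obtain x where x: "x \<in> carrier_vec l" "y = A *\<^sub>v x" using SA_eq by auto
        have "A *\<^sub>v (F *\<^sub>v x) = (A * F) *\<^sub>v x" using A F x by (simp add: assoc_mult_mat_vec)
        then have "y = A *\<^sub>v (F *\<^sub>v x)" using AF x by simp
        moreover have "F *\<^sub>v x \<in> SF" using SF_eq F x by auto
        ultimately show "y \<in> (\<lambda>v. A *\<^sub>v v) ` SF" by blast
      qed
    qed
    finally show ?thesis .
  qed
  have dimA: "vectorspace.dim class_ring (T.W.vs T.imT) = rank A"
    unfolding imT rank_def SA_def by simp
  have dimF: "T.V.dim = rank F" unfolding rank_def SF_def by simp
  have dim0: "vectorspace.dim class_ring (T.V.vs T.kerT) = 0" using rn dimA dimF rk by simp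
  interpret K0: vectorspace class_ring "T.V.vs T.kerT"
    using T.kerT_is_subspace T.V.subspace_is_vs by blast
  have kerC: "carrier (T.V.vs T.kerT) = T.kerT" by simp
  have kerSF: "T.kerT \<subseteq> SF"
    using T.kerT_is_subspace unfolding VectorSpace.subspace_def submodule_def by auto
  have finK: "finite T.kerT"
    by (rule finite_subset[OF _ finite_carrier_vec_fin[of l]]) (use SF_eq kerSF in auto)
  have "K0.gen_set (carrier (T.V.vs T.kerT))"
    using K0.span_is_subset2[of "carrier (T.V.vs T.kerT)"] K0.in_own_span[of "carrier (T.V.vs T.kerT)"] by auto
  then have fdK: "K0.fin_dim" unfolding K0.fin_dim_def using finK by auto
  obtain \<beta> where b: "finite \<beta>" "K0.basis \<beta>" using K0.finite_basis_exists[OF fdK] by blast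
  have "card \<beta> = 0" using K0.dim_basis[OF b] dim0 by simp
  then have "\<beta> = {}" using b(1) by simp
  then have "T.kerT = {0\<^sub>v l}" using b(2) K0.span_empty unfolding K0.basis_def by simp
  moreover have "F *\<^sub>v c \<in> T.kerT"
  proof -
    have "A *\<^sub>v (F *\<^sub>v c) = (A * F) *\<^sub>v c" using A F c by (simp add: assoc_mult_mat_vec)
    then show ?thesis using AF Ac SF_eq F c unfolding T.ker_def by auto
  qed
  ultimately show ?thesis by simp
qed

lemma mult_mat_vec_uminus:
  fixes A :: "'a::comm_ring_1 mat"
  assumes "A \<in> carrier_mat nr nc" "v \<in> carrier_vec nc"
  shows "A *\<^sub>v (- v) = - (A *\<^sub>v v)"
  using assms by (intro eq_vecI) (auto simp: scalar_prod_uminus_right)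

lemma orth_kernel:
  fixes H :: "'a::comm_ring_1 mat"
  assumes H: "H \<in> carrier_mat m n"
  shows "orth_compl n (row_space H) = {v \<in> carrier_vec n. H *\<^sub>v v = 0\<^sub>v m}"
proof (intro subset_antisym subsetI)
  fix v assume v: "v \<in> orth_compl n (row_space H)"
  then have vc: "v \<in> carrier_vec n" and o: "\<And>w. w \<in> row_space H \<Longrightarrow> w \<bullet> v = 0"
    unfolding orth_compl_def by auto
  have "H *\<^sub>v v = 0\<^sub>v m"
  proof (rule eq_vecI)
    fix i assume "i < dim_vec (0\<^sub>v m :: 'a vec)"
    then have i: "i < m" by simp
    have "transpose_mat H *\<^sub>v unit_vec m i \<in> row_space H"
      unfolding row_space_def using H by auto
    then have "(transpose_mat H *\<^sub>v unit_vec m i) \<bullet> v = 0" by (rule o)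
    then have "unit_vec m i \<bullet> (H *\<^sub>v v) = 0"
      using transpose_vec_mult_scalar[OF H vc, of "unit_vec m i"] i by simp
    moreover have "H *\<^sub>v v \<in> carrier_vec m" by (rule mult_mat_vec_carrier[OF H vc])
    ultimately show "(H *\<^sub>v v) $ i = 0\<^sub>v m $ i" using i H scalar_prod_left_unit[of "H *\<^sub>v v" m i] by simp
  qed (use H in simp)
  then show "v \<in> {v \<in> carrier_vec n. H *\<^sub>v v = 0\<^sub>v m}" using vc by simp
next
  fix v assume "v \<in> {v \<in> carrier_vec n. H *\<^sub>v v = 0\<^sub>v m}"
  then have vc: "v \<in> carrier_vec n" and Hv: "H *\<^sub>v v = 0\<^sub>v m" by auto
  show "v \<in> orth_compl n (row_space H)"
    unfolding orth_compl_def row_space_def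
  proof (intro CollectI conjI ballI vc)
    fix w assume "w \<in> {v. \<exists>c\<in>carrier_vec (dim_row H). v = transpose_mat H *\<^sub>v c}"
    then obtain c where c: "c \<in> carrier_vec m" "w = transpose_mat H *\<^sub>v c" using H by auto
    show "w \<bullet> v = 0" using transpose_vec_mult_scalar[OF H vc c(1)] c Hv by simp
  qed
qed

lemma hcat_carrier: "A \<in> carrier_mat r n1 \<Longrightarrow> B \<in> carrier_mat r n2 \<Longrightarrow> hcat A B \<in> carrier_mat r (n1 + n2)"
  unfolding hcat_def by auto

lemma hcat_mult:
  fixes A :: "'a::comm_ring_1 mat"
  assumes A: "A \<in> carrier_mat r n1" and B: "B \<in> carrier_mat r n2"
    and x: "x \<in> carrier_vec n1" and y: "y \<in> carrier_vec n2"
  shows "hcat A B *\<^sub>v (x @\<^sub>v y) = A *\<^sub>v x + B *\<^sub>v y"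
proof (rule eq_vecI)
  fix i assume "i < dim_vec (A *\<^sub>v x + B *\<^sub>v y)"
  then have i: "i < r" using B by simp
  have "row (hcat A B) i = row A i @\<^sub>v row B i"
    using A B i by (intro eq_vecI) (auto simp: hcat_def)
  then show "(hcat A B *\<^sub>v (x @\<^sub>v y)) $ i = (A *\<^sub>v x + B *\<^sub>v y) $ i"
    using A B x y i hcat_carrier[OF A B] by (simp add: scalar_prod_append[of _ n1 _ n2])
qed (use A B hcat_carrier[OF A B] in auto)

lemma hcat_transpose_mult:
  fixes X :: "'a::comm_ring_1 mat"
  assumes X: "X \<in> carrier_mat r n1" and Y: "Y \<in> carrier_mat r n2" and c: "c \<in> carrier_vec r"
  shows "transpose_mat (hcat X Y) *\<^sub>v c = (transpose_mat X *\<^sub>v c) @\<^sub>v (transpose_mat Y *\<^sub>v c)"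
proof (rule eq_vecI)
  fix i assume "i < dim_vec ((transpose_mat X *\<^sub>v c) @\<^sub>v (transpose_mat Y *\<^sub>v c))"
  then have i: "i < n1 + n2" using X Y by simp
  show "(transpose_mat (hcat X Y) *\<^sub>v c) $ i = ((transpose_mat X *\<^sub>v c) @\<^sub>v (transpose_mat Y *\<^sub>v c)) $ i"
    using X Y c i hcat_carrier[OF X Y]
    by (auto simp: hcat_def mult_mat_vec_def scalar_prod_def row_def col_def)
qed (use X Y hcat_carrier[OF X Y] in auto)

lemma wgt_append_zero: "wgt (x @\<^sub>v 0\<^sub>v k) = wgt x"
proof -
  have "{i. i < dim_vec (x @\<^sub>v 0\<^sub>v k) \<and> (x @\<^sub>v 0\<^sub>v k) $ i \<noteq> 0} = {i. i < dim_vec x \<and> x $ i \<noteq> 0}"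
    by (auto split: if_splits)
  then show ?thesis unfolding wgt_def by simp
qed

lemma wgt_zero_append: "wgt (0\<^sub>v k @\<^sub>v y) = wgt y"
proof -
  have "{i. i < dim_vec (0\<^sub>v k @\<^sub>v y) \<and> (0\<^sub>v k @\<^sub>v y) $ i \<noteq> 0} = (\<lambda>i. i + k) ` {i. i < dim_vec y \<and> y $ i \<noteq> 0}"
  proof (intro subset_antisym subsetI)
    fix i assume "i \<in> {i. i < dim_vec (0\<^sub>v k @\<^sub>v y) \<and> (0\<^sub>v k @\<^sub>v y) $ i \<noteq> 0}"
    then show "i \<in> (\<lambda>i. i + k) ` {i. i < dim_vec y \<and> y $ i \<noteq> 0}"
      by (intro image_eqI[of _ _ "i - k"]) (auto split: if_splits)
  qed auto
  then show ?thesis unfolding wgt_def by (simp add: card_image)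
qed

lemma Inf_img_le:
  fixes f g :: "'b \<Rightarrow> enat"
  assumes "\<And>x. x \<in> X \<Longrightarrow> \<exists>y\<in>Y. f y \<le> g x"
  shows "Inf (f ` Y) \<le> Inf (g ` X)"
proof (rule Inf_greatest)
  fix z assume "z \<in> g ` X"
  then obtain x where x: "x \<in> X" "z = g x" by auto
  then obtain y where "y \<in> Y" "f y \<le> g x" using assms by auto
  then show "Inf (f ` Y) \<le> z" using x by (meson INF_lower order_trans)
qed

lemma mat_mult_zero_vec[simp]:
  fixes A :: "'a::comm_ring_1 mat"
  shows "A \<in> carrier_mat nr nc \<Longrightarrow> A *\<^sub>v 0\<^sub>v nc = 0\<^sub>v nr"
  by (intro eq_vecI) (auto simp: scalar_prod_def)

lemma zero_mat_mult_vec[simp]: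
  fixes v :: "'a::comm_ring_1 vec"
  shows "v \<in> carrier_vec nc \<Longrightarrow> 0\<^sub>m nr nc *\<^sub>v v = 0\<^sub>v nr"
  by (intro eq_vecI) (auto simp: scalar_prod_def)

lemma one_minus_mult:
  fixes F :: "'a::comm_ring_1 mat"
  assumes "F \<in> carrier_mat l l" "c \<in> carrier_vec l"
  shows "(1\<^sub>m l - F) *\<^sub>v c = c - F *\<^sub>v c"
  using minus_mult_distrib_mat_vec[OF one_carrier_mat assms(1) assms(2)] assms by simp

theorem mainTheorem4:
  fixes A B EA FA EB FB :: "'a::{finite,field} mat" and l :: nat
  assumes A: "A \<in> carrier_mat l l" and B: "B \<in> carrier_mat l l"
    and comm: "A * B = B * A"
    and idA: "assoc_idempotents l A EA FA"
    and idB: "assoc_idempotents l B EB FB"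
  defines "HX \<equiv> hcat A B"
    and "HZ \<equiv> hcat (transpose_mat B) (- transpose_mat A)"
    and "HXL \<equiv> four_block_mat A B (0\<^sub>m l l) (1\<^sub>m l - EA)"
    and "HXR \<equiv> four_block_mat A B (1\<^sub>m l - EB) (0\<^sub>m l l)"
    and "HZL \<equiv> transpose_mat (B * (1\<^sub>m l - FA))"
    and "HZR \<equiv> transpose_mat (A * (1\<^sub>m l - FB))"
    and "CL \<equiv> {u \<in> carrier_vec l. A *\<^sub>v u = 0\<^sub>v l \<and> EB *\<^sub>v u = 0\<^sub>v l}"
    and "CR \<equiv> {u \<in> carrier_vec l. B *\<^sub>v u = 0\<^sub>v l \<and> EA *\<^sub>v u = 0\<^sub>v l}"
  shows "dZ HX HZ \<le> dZ HXL HZ \<and> dZ HXL HZ \<le> dZ A HZL \<and> dZ A HZL \<le> min_dist l CL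
       \<and> dZ HX HZ \<le> dZ HXR HZ \<and> dZ HXR HZ \<le> dZ B HZR \<and> dZ B HZR \<le> min_dist l CR"
proof -
  from idA have EA: "EA \<in> carrier_mat l l" and FA: "FA \<in> carrier_mat l l"
    and rkA: "vec_space.rank l FA = vec_space.rank l A" and EAA: "EA * A = A" and AFA: "A * FA = A"
    unfolding assoc_idempotents_def by auto
  from idB have EB: "EB \<in> carrier_mat l l" and FB: "FB \<in> carrier_mat l l"
    and rkB: "vec_space.rank l FB = vec_space.rank l B" and EBB: "EB * B = B" and BFB: "B * FB = B"
    unfolding assoc_idempotents_def by auto
  have HX: "HX \<in> carrier_mat l (l + l)" unfolding HX_def using hcat_carrier[OF A B] .
  have HZ: "HZ \<in> carrier_mat l (l + l)" unfolding HZ_def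
    using hcat_carrier[of "transpose_mat B" l l "- transpose_mat A" l] A B by auto
  have HXL: "HXL \<in> carrier_mat (l + l) (l + l)" unfolding HXL_def using A B EA by auto
  have HXR: "HXR \<in> carrier_mat (l + l) (l + l)" unfolding HXR_def using A B EB by auto
  have HZL: "HZL \<in> carrier_mat l l" unfolding HZL_def using B FA by auto
  have HZR: "HZR \<in> carrier_mat l l" unfolding HZR_def using A FB by auto
  have dcHX: "dim_col HX = l + l" using HX by simp
  have dcHXL: "dim_col HXL = l + l" using HXL by simp
  have dcHXR: "dim_col HXR = l + l" using HXR by simp
  have kHX: "orth_compl (l+l) (row_space HX) = {v \<in> carrier_vec (l+l). HX *\<^sub>v v = 0\<^sub>v l}"
    by (rule orth_kernel[OF HX])
  have kHXL: "orth_compl (l+l) (row_space HXL) = {v \<in> carrier_vec (l+l). HXL *\<^sub>v v = 0\<^sub>v (l+l)}"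
    by (rule orth_kernel[OF HXL])
  have kHXR: "orth_compl (l+l) (row_space HXR) = {v \<in> carrier_vec (l+l). HXR *\<^sub>v v = 0\<^sub>v (l+l)}"
    by (rule orth_kernel[OF HXR])
  have kA: "orth_compl l (row_space A) = {v \<in> carrier_vec l. A *\<^sub>v v = 0\<^sub>v l}"
    by (rule orth_kernel[OF A])
  have kB: "orth_compl l (row_space B) = {v \<in> carrier_vec l. B *\<^sub>v v = 0\<^sub>v l}"
    by (rule orth_kernel[OF B])
  have cEA: "1\<^sub>m l - EA \<in> carrier_mat l l" using EA by (intro minus_carrier_mat) auto
  have cEB: "1\<^sub>m l - EB \<in> carrier_mat l l" using EB by (intro minus_carrier_mat) auto
  have zEA: "(1\<^sub>m l - EA) *\<^sub>v 0\<^sub>v l = 0\<^sub>v l" by (rule mat_mult_zero_vec[OF cEA])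
  have zEB: "(1\<^sub>m l - EB) *\<^sub>v 0\<^sub>v l = 0\<^sub>v l" by (rule mat_mult_zero_vec[OF cEB])
  have cFA: "1\<^sub>m l - FA \<in> carrier_mat l l" using FA by (intro minus_carrier_mat) auto
  have cFB: "1\<^sub>m l - FB \<in> carrier_mat l l" using FB by (intro minus_carrier_mat) auto
  have zz: "0\<^sub>v (l+l) = (0\<^sub>v l @\<^sub>v 0\<^sub>v l :: 'a vec)" by (intro eq_vecI) auto
  have rHZ: "\<exists>c\<in>carrier_vec l. x = B *\<^sub>v c \<and> y = - (A *\<^sub>v c)"
    if "x \<in> carrier_vec l" "y \<in> carrier_vec l" "x @\<^sub>v y \<in> row_space HZ" for x y
  proof -
    from that(3) obtain c where c: "c \<in> carrier_vec l" "x @\<^sub>v y = transpose_mat HZ *\<^sub>v c"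
      unfolding row_space_def using HZ by auto
    have "transpose_mat HZ *\<^sub>v c = (B *\<^sub>v c) @\<^sub>v (- (A *\<^sub>v c))"
      unfolding HZ_def using hcat_transpose_mult[of "transpose_mat B" l l "- transpose_mat A" l c] A B c
      by auto
    then have "x @\<^sub>v y = (B *\<^sub>v c) @\<^sub>v (- (A *\<^sub>v c))" using c by simp
    then have "x = B *\<^sub>v c \<and> y = - (A *\<^sub>v c)"
      using append_vec_eq[of x l "B *\<^sub>v c" y "- (A *\<^sub>v c)"] that B c by auto
    then show ?thesis using c by blast
  qed
  have kerFA: "(1\<^sub>m l - FA) *\<^sub>v c = c" if "c \<in> carrier_vec l" "A *\<^sub>v c = 0\<^sub>v l" for c
    using ker_idem[OF A FA AFA rkA that] one_minus_mult[OF FA that(1)] that(1) by simp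
  have kerFB: "(1\<^sub>m l - FB) *\<^sub>v c = c" if "c \<in> carrier_vec l" "B *\<^sub>v c = 0\<^sub>v l" for c
    using ker_idem[OF B FB BFB rkB that] one_minus_mult[OF FB that(1)] that(1) by simp
  have p1: "dZ HX HZ \<le> dZ HXL HZ"
  proof -
    have "orth_compl (l+l) (row_space HXL) \<subseteq> orth_compl (l+l) (row_space HX)"
    proof
      fix v assume "v \<in> orth_compl (l+l) (row_space HXL)"
      then have v: "v \<in> carrier_vec (l+l)" and Hv: "HXL *\<^sub>v v = 0\<^sub>v (l+l)" using kHXL by auto
      define x where "x = vec_first v l"
      define y where "y = vec_last v l"
      have x: "x \<in> carrier_vec l" and y: "y \<in> carrier_vec l" unfolding x_def y_def by auto
      have vxy: "v = x @\<^sub>v y" unfolding x_def y_def using v by simp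
      have "HXL *\<^sub>v v = (A *\<^sub>v x + B *\<^sub>v y) @\<^sub>v (0\<^sub>m l l *\<^sub>v x + (1\<^sub>m l - EA) *\<^sub>v y)" (is "_ = _ @\<^sub>v ?r")
        unfolding vxy HXL_def by (rule four_block_mat_mult_vec[OF A B _ _ x y]) (use EA in auto)
      then have e: "(A *\<^sub>v x + B *\<^sub>v y) @\<^sub>v ?r = 0\<^sub>v l @\<^sub>v 0\<^sub>v l" using Hv zz by simp
      have "A *\<^sub>v x + B *\<^sub>v y \<in> carrier_vec l" using A B x y by simp
      then have "A *\<^sub>v x + B *\<^sub>v y = 0\<^sub>v l"
        using append_vec_eq[of "A *\<^sub>v x + B *\<^sub>v y" l "0\<^sub>v l"] e by auto
      moreover have "HX *\<^sub>v v = A *\<^sub>v x + B *\<^sub>v y" unfolding HX_def vxy by (rule hcat_mult[OF A B x y])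
      ultimately show "v \<in> orth_compl (l+l) (row_space HX)" using kHX v by auto
    qed
    then show ?thesis unfolding dZ_def dcHX dcHXL
      by (intro Inf_superset_mono image_mono Diff_mono) auto
  qed
  have p4: "dZ HX HZ \<le> dZ HXR HZ"
  proof -
    have "orth_compl (l+l) (row_space HXR) \<subseteq> orth_compl (l+l) (row_space HX)"
    proof
      fix v assume "v \<in> orth_compl (l+l) (row_space HXR)"
      then have v: "v \<in> carrier_vec (l+l)" and Hv: "HXR *\<^sub>v v = 0\<^sub>v (l+l)" using kHXR by auto
      define x where "x = vec_first v l"
      define y where "y = vec_last v l"
      have x: "x \<in> carrier_vec l" and y: "y \<in> carrier_vec l" unfolding x_def y_def by auto
      have vxy: "v = x @\<^sub>v y" unfolding x_def y_def using v by simp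
      have "HXR *\<^sub>v v = (A *\<^sub>v x + B *\<^sub>v y) @\<^sub>v ((1\<^sub>m l - EB) *\<^sub>v x + 0\<^sub>m l l *\<^sub>v y)" (is "_ = _ @\<^sub>v ?r")
        unfolding vxy HXR_def by (rule four_block_mat_mult_vec[OF A B _ _ x y]) (use EB in auto)
      then have e: "(A *\<^sub>v x + B *\<^sub>v y) @\<^sub>v ?r = 0\<^sub>v l @\<^sub>v 0\<^sub>v l" using Hv zz by simp
      have "A *\<^sub>v x + B *\<^sub>v y \<in> carrier_vec l" using A B x y by simp
      then have "A *\<^sub>v x + B *\<^sub>v y = 0\<^sub>v l"
        using append_vec_eq[of "A *\<^sub>v x + B *\<^sub>v y" l "0\<^sub>v l"] e by auto
      moreover have "HX *\<^sub>v v = A *\<^sub>v x + B *\<^sub>v y" unfolding HX_def vxy by (rule hcat_mult[OF A B x y])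
      ultimately show "v \<in> orth_compl (l+l) (row_space HX)" using kHX v by auto
    qed
    then show ?thesis unfolding dZ_def dcHX dcHXR
      by (intro Inf_superset_mono image_mono Diff_mono) auto
  qed
  have p2: "dZ HXL HZ \<le> dZ A HZL"
    unfolding dZ_def dcHXL
  proof (rule Inf_img_le)
    fix x assume xin: "x \<in> orth_compl (dim_col A) (row_space A) - row_space HZL"
    then have x: "x \<in> carrier_vec l" and Ax: "A *\<^sub>v x = 0\<^sub>v l" and xn: "x \<notin> row_space HZL"
      using kA A by auto
    define v where "v = x @\<^sub>v 0\<^sub>v l"
    have v: "v \<in> carrier_vec (l+l)" unfolding v_def using x by auto
    have "HXL *\<^sub>v v = (A *\<^sub>v x + B *\<^sub>v 0\<^sub>v l) @\<^sub>v (0\<^sub>m l l *\<^sub>v x + (1\<^sub>m l - EA) *\<^sub>v 0\<^sub>v l)"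
      unfolding v_def HXL_def by (rule four_block_mat_mult_vec[OF A B _ _ x]) (use EA in auto)
    also have "\<dots> = 0\<^sub>v (l+l)" using zEA Ax A B EA x zz by simp
    finally have "v \<in> orth_compl (l+l) (row_space HXL)" using kHXL v by auto
    moreover have "v \<notin> row_space HZ"
    proof
      assume "v \<in> row_space HZ"
      then obtain c where c: "c \<in> carrier_vec l" "x = B *\<^sub>v c" "0\<^sub>v l = - (A *\<^sub>v c)"
        using rHZ[OF x zero_carrier_vec[of l]] unfolding v_def by blast
      have Ac: "A *\<^sub>v c = 0\<^sub>v l"
        using c(3) uminus_zero_vec_eq[of "A *\<^sub>v c" l] A c by (metis mult_mat_vec_carrier)
      have "x = B *\<^sub>v ((1\<^sub>m l - FA) *\<^sub>v c)" using c(2) kerFA[OF c(1) Ac] by simp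
      also have "\<dots> = (B * (1\<^sub>m l - FA)) *\<^sub>v c" using assoc_mult_mat_vec[OF B cFA c(1)] by simp
      also have "\<dots> = transpose_mat HZL *\<^sub>v c" unfolding HZL_def by simp
      finally have "x \<in> row_space HZL" unfolding row_space_def using HZL c by auto
      then show False using xn by simp
    qed
    moreover have "wgt v = wgt x" unfolding v_def by (rule wgt_append_zero)
    ultimately show "\<exists>y\<in>orth_compl (l + l) (row_space HXL) - row_space HZ. enat (wgt y) \<le> enat (wgt x)"
      by (intro bexI[of _ v]) auto
  qed
  have p5: "dZ HXR HZ \<le> dZ B HZR"
    unfolding dZ_def dcHXR
  proof (rule Inf_img_le)
    fix y assume yin: "y \<in> orth_compl (dim_col B) (row_space B) - row_space HZR"
    then have y: "y \<in> carrier_vec l" and By: "B *\<^sub>v y = 0\<^sub>v l" and yn: "y \<notin> row_space HZR"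
      using kB B by auto
    define v where "v = 0\<^sub>v l @\<^sub>v y"
    have v: "v \<in> carrier_vec (l+l)" unfolding v_def using y by auto
    have "HXR *\<^sub>v v = (A *\<^sub>v 0\<^sub>v l + B *\<^sub>v y) @\<^sub>v ((1\<^sub>m l - EB) *\<^sub>v 0\<^sub>v l + 0\<^sub>m l l *\<^sub>v y)"
      unfolding v_def HXR_def by (rule four_block_mat_mult_vec[OF A B _ _ _ y]) (use EB in auto)
    also have "\<dots> = 0\<^sub>v (l+l)" using zEB By A B EB y zz by simp
    finally have "v \<in> orth_compl (l+l) (row_space HXR)" using kHXR v by auto
    moreover have "v \<notin> row_space HZ"
    proof
      assume "v \<in> row_space HZ"
      then obtain c where c: "c \<in> carrier_vec l" "0\<^sub>v l = B *\<^sub>v c" "y = - (A *\<^sub>v c)"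
        using rHZ[OF zero_carrier_vec[of l] y] unfolding v_def by blast
      have c': "- c \<in> carrier_vec l" using c by simp
      have Bc: "B *\<^sub>v (- c) = 0\<^sub>v l" unfolding mult_mat_vec_uminus[OF B c(1)] c(2)[symmetric]
        by (intro eq_vecI) auto
      have "y = A *\<^sub>v (- c)" using c(3) mult_mat_vec_uminus[OF A c(1)] by simp
      also have "\<dots> = A *\<^sub>v ((1\<^sub>m l - FB) *\<^sub>v (- c))" using kerFB[OF c' Bc] by simp
      also have "\<dots> = (A * (1\<^sub>m l - FB)) *\<^sub>v (- c)" using assoc_mult_mat_vec[OF A cFB c'] by simp
      also have "\<dots> = transpose_mat HZR *\<^sub>v (- c)" unfolding HZR_def by simp
      finally have "y \<in> row_space HZR" unfolding row_space_def using HZR c' by auto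
      then show False using yn by simp
    qed
    moreover have "wgt v = wgt y" unfolding v_def by (rule wgt_zero_append)
    ultimately show "\<exists>z\<in>orth_compl (l + l) (row_space HXR) - row_space HZ. enat (wgt z) \<le> enat (wgt y)"
      by (intro bexI[of _ v]) auto
  qed
  have p3: "dZ A HZL \<le> min_dist l CL"
  proof -
    have "CL - {0\<^sub>v l} \<subseteq> orth_compl (dim_col A) (row_space A) - row_space HZL"
    proof
      fix u assume "u \<in> CL - {0\<^sub>v l}"
      then have u: "u \<in> carrier_vec l" "A *\<^sub>v u = 0\<^sub>v l" "EB *\<^sub>v u = 0\<^sub>v l" "u \<noteq> 0\<^sub>v l"
        unfolding CL_def by auto
      have "u \<notin> row_space HZL"
      proof
        assume "u \<in> row_space HZL"
        then obtain c where c: "c \<in> carrier_vec l" "u = transpose_mat HZL *\<^sub>v c"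
          unfolding row_space_def using HZL by auto
        have cc: "(1\<^sub>m l - FA) *\<^sub>v c \<in> carrier_vec l" by (rule mult_mat_vec_carrier[OF cFA c(1)])
        have ueq: "u = B *\<^sub>v ((1\<^sub>m l - FA) *\<^sub>v c)" using c assoc_mult_mat_vec[OF B cFA c(1)] unfolding HZL_def by simp
        have "EB *\<^sub>v u = (EB * B) *\<^sub>v ((1\<^sub>m l - FA) *\<^sub>v c)" unfolding ueq using assoc_mult_mat_vec[OF EB B cc] by simp
        then have "EB *\<^sub>v u = u" using EBB ueq by simp
        then show False using u by simp
      qed
      then show "u \<in> orth_compl (dim_col A) (row_space A) - row_space HZL" using u kA A by auto
    qed
    then show ?thesis unfolding dZ_def min_dist_def
      by (intro Inf_superset_mono image_mono)
  qed
  have p6: "dZ B HZR \<le> min_dist l CR"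
  proof -
    have "CR - {0\<^sub>v l} \<subseteq> orth_compl (dim_col B) (row_space B) - row_space HZR"
    proof
      fix u assume "u \<in> CR - {0\<^sub>v l}"
      then have u: "u \<in> carrier_vec l" "B *\<^sub>v u = 0\<^sub>v l" "EA *\<^sub>v u = 0\<^sub>v l" "u \<noteq> 0\<^sub>v l"
        unfolding CR_def by auto
      have "u \<notin> row_space HZR"
      proof
        assume "u \<in> row_space HZR"
        then obtain c where c: "c \<in> carrier_vec l" "u = transpose_mat HZR *\<^sub>v c"
          unfolding row_space_def using HZR by auto
        have cc: "(1\<^sub>m l - FB) *\<^sub>v c \<in> carrier_vec l" by (rule mult_mat_vec_carrier[OF cFB c(1)])
        have ueq: "u = A *\<^sub>v ((1\<^sub>m l - FB) *\<^sub>v c)" using c assoc_mult_mat_vec[OF A cFB c(1)] unfolding HZR_def by simp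
        have "EA *\<^sub>v u = (EA * A) *\<^sub>v ((1\<^sub>m l - FB) *\<^sub>v c)" unfolding ueq using assoc_mult_mat_vec[OF EA A cc] by simp
        then have "EA *\<^sub>v u = u" using EAA ueq by simp
        then show False using u by simp
      qed
      then show "u \<in> orth_compl (dim_col B) (row_space B) - row_space HZR" using u kB B by auto
    qed
    then show ?thesis unfolding dZ_def min_dist_def
      by (intro Inf_superset_mono image_mono)
  qed
  show ?thesis using p1 p2 p3 p4 p5 p6 by simp
qed

end
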